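(* Let $q(m)$ be the number of partitions of $m$ into distinct parts ($q(0)=1$, $q(m)=0$ for $m<0$) and $s(n)=q(n)-2q(n-1)+q(n-2)$. Call a butterfly partition of $n$ a partition of $n$ into distinct parts $p_1>p_2>\dots>p_k$ with $k\ge 3$, $p_1=p_2+1=p_3+2$ and $p_k\ge 2$, and for $n\ge 6$ let $s_e(n)$ be the number of butterfly partitions of $n$ with $p_2$ even. For an integer $t$ put $P_1(t)=\tfrac12(3t^2+t+4)$, $P_2(t)=\tfrac12(3(t+1)^2-t-1)$, $P_3(t)=\tfrac12(3(t+1)^2-t+3)$, $P_4(t)=\tfrac12(3(t+1)^2+t+1)$. Then for every integer $n\ge 6$: (a) if $n\notin\{P_1(t),P_2(t),P_3(t),P_4(t)\}$ for every integer $t\ge 2$, then $s(n)=2s_e(n)$, in particular $s(n)$ is even; (b) if $n=P_1(t)$ or $n=P_4(t)$ for some integer $t\ge2$, then $s(n)=2s_e(n)+1$, in particular $s(n)$ is odd; (c) if $n=P_2(t)$ or $n=P_3(t)$ for some integer $t\ge 2$, then $s(n)=2s_e(n)-1$, in particular $s(n)$ is odd. *)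

theory Defs
  imports Main
begin

text \<open>A partition of m into distinct parts is identified with the finite set of its
  (positive) parts, whose sum is m.\<close>
definition distinct_partitions :: "nat \<Rightarrow> nat set set" where
  "distinct_partitions m = {A. finite A \<and> 0 \<notin> A \<and> \<Sum>A = m}"

definition q :: "int \<Rightarrow> nat" where
  "q m = (if m < 0 then 0 else card (distinct_partitions (nat m)))"

definition s :: "int \<Rightarrow> int" where
  "s n = int (q n) - 2 * int (q (n - 1)) + int (q (n - 2))"

text \<open>The parts in decreasing order p_1 > p_2 > ... > p_k (list index i-1 is p_i).\<close>
definition parts :: "nat set \<Rightarrow> nat list" where
  "parts A = rev (sorted_list_of_set A)"

definition butterfly :: "nat \<Rightarrow> nat set \<Rightarrow> bool" where
  "butterfly n A \<longleftrightarrow> A \<in> distinct_partitions n \<and> card A \<ge> 3 \<and>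
     parts A ! 0 = parts A ! 1 + 1 \<and> parts A ! 0 = parts A ! 2 + 2 \<and>
     parts A ! (card A - 1) \<ge> 2"

definition s_e :: "nat \<Rightarrow> nat" where
  "s_e n = card {A. butterfly n A \<and> even (parts A ! 1)}"

definition P1 :: "int \<Rightarrow> int" where "P1 t = (3 * t^2 + t + 4) div 2"
definition P2 :: "int \<Rightarrow> int" where "P2 t = (3 * (t + 1)^2 - t - 1) div 2"
definition P3 :: "int \<Rightarrow> int" where "P3 t = (3 * (t + 1)^2 - t + 3) div 2"
definition P4 :: "int \<Rightarrow> int" where "P4 t = (3 * (t + 1)^2 + t + 1) div 2"

end

theory Submission
  imports Defs "HOL-Computational_Algebra.Polynomial"
begin

definition Xp :: "int poly" where "Xp = [:0,1:]"

lemma coeff_Xp_mult: "coeff (Xp^k * p) n = (if n < k then 0 else coeff p (n - k))"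
proof -
  have "Xp^k = monom 1 k" by (simp add: Xp_def monom_altdef)
  then show ?thesis by (simp add: coeff_monom_mult)
qed

lemma coeff_Xp: "coeff (Xp^k) n = (if n = k then 1 else 0)"
  using coeff_Xp_mult[of k 1 n] by auto

lemma coeff_Xp1: "coeff Xp n = (if n = 1 then 1 else 0)"
  using coeff_Xp[of 1 n] by simp

lemma Xp_pow_eq: "a = b \<Longrightarrow> Xp^a = Xp^b" by simp

definition G :: "nat \<Rightarrow> nat \<Rightarrow> int poly" where
  "G c i = (\<Prod>k\<in>{c..<c+i}. 1 + Xp^k)"

lemma G_0[simp]: "G c 0 = 1" by (simp add: G_def)
lemma G_Suc: "G c (Suc i) = G c i * (1 + Xp^(c+i))"
  by (simp add: G_def)
lemma G_Suc': "G c (Suc i) = (1 + Xp^c) * G (Suc c) i"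
proof -
  have "{c..<c + Suc i} = insert c {Suc c..<Suc c + i}" by auto
  then show ?thesis by (simp add: G_def)
qed

definition AA :: "nat \<Rightarrow> int poly" where "AA L = (\<Sum>i<L. Xp^(2*i+3) * G 1 i)"
definition AB :: "nat \<Rightarrow> int poly" where "AB L = (\<Sum>i<L. Xp^(2*i+5) * G 2 i)"
definition BB :: "nat \<Rightarrow> int poly" where "BB L = (\<Sum>i<L. Xp^(3*i+9) * G 2 i)"

lemma I1: "(1 - Xp) * G 1 (Suc L) = 1 + AA L - Xp^(L+2) * G 1 L"
proof (induction L)
  case 0
  then show ?case by (simp add: AA_def G_Suc algebra_simps power2_eq_square)
next
  case (Suc L)
  have g1: "G 1 (Suc (Suc L)) = G 1 (Suc L) * (1 + Xp^(L+2))" by (simp add: G_Suc)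
  have g2: "G 1 (Suc L) = G 1 L * (1 + Xp^(L+1))" by (simp add: G_Suc)
  have a1: "AA (Suc L) = AA L + Xp^(2*L+3) * G 1 L" by (simp add: AA_def)
  have "(1 - Xp) * G 1 (Suc (Suc L)) = (1 - Xp) * G 1 (Suc L) + Xp^(L+2) * ((1 - Xp) * G 1 L * (1 + Xp^(L+1)))"
    unfolding g1 g2 by (simp add: algebra_simps)
  also have "\<dots> = 1 + AA L - Xp^(L+2) * G 1 L + Xp^(L+2) * ((1 - Xp) * G 1 L * (1 + Xp^(L+1)))"
    using Suc by simp
  also have "\<dots> = 1 + AA (Suc L) - Xp^(Suc L+2) * G 1 (Suc L)"
  proof -
    have p1: "Xp^(L+2) = Xp^L*Xp^2" "Xp^(L+1) = Xp^L*Xp^1" unfolding power_add[symmetric] by (rule Xp_pow_eq, simp)+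
    have p2: "Xp^(2*L+3) = Xp^L*Xp^L*Xp^3" unfolding power_add[symmetric] by (rule Xp_pow_eq) simp
    have p3: "Xp^(Suc L+2) = Xp^L*Xp^3" unfolding power_add[symmetric] by (rule Xp_pow_eq) simp
    show ?thesis unfolding a1 g2 p1 p2 p3 by (simp add: algebra_simps power2_eq_square power3_eq_cube)
  qed
  finally show ?case .
qed

lemma I2: "AA (Suc L) = Xp^3 + (1 + Xp) * AB L"
proof -
  have "AA (Suc L) = Xp^3 * G 1 0 + (\<Sum>i<L. Xp^(2*Suc i+3) * G 1 (Suc i))"
    unfolding AA_def by (subst sum.lessThan_Suc_shift) simp
  also have "(\<Sum>i<L. Xp^(2*Suc i+3) * G 1 (Suc i)) = (1 + Xp) * AB L"
    unfolding AB_def sum_distrib_left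
  proof (rule sum.cong)
    fix i assume "i \<in> {..<L}"
    have h1: "Xp^(2*Suc i+3) = Xp^(2*i+5)" by (rule Xp_pow_eq) simp
    have h2: "G 1 (Suc i) = (1 + Xp) * G 2 i"
      using G_Suc'[of 1 i] by (simp add: numeral_2_eq_2)
    show "Xp^(2*Suc i+3) * G 1 (Suc i) = (1 + Xp) * (Xp^(2*i+5) * G 2 i)"
      unfolding h1 h2 by (simp only: mult_ac)
  qed simp
  finally show ?thesis by simp
qed

lemma I3: "AB (Suc L) = Xp^5 + Xp^2 * AB L + BB L"
proof -
  have "AB (Suc L) = Xp^5 * G 2 0 + (\<Sum>i<L. Xp^(2*Suc i+5) * G 2 (Suc i))"
    unfolding AB_def by (subst sum.lessThan_Suc_shift) simp
  also have "(\<Sum>i<L. Xp^(2*Suc i+5) * G 2 (Suc i)) = Xp^2 * AB L + BB L"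
    unfolding AB_def BB_def sum_distrib_left sum.distrib[symmetric]
  proof (rule sum.cong)
    fix i assume "i \<in> {..<L}"
    have h1: "Xp^(2*Suc i+5) = Xp^2 * Xp^(2*i+5)" unfolding power_add[symmetric] by (rule Xp_pow_eq) simp
    have h2: "Xp^(2*Suc i+5) * Xp^(2+i) = Xp^(3*i+9)" unfolding power_add[symmetric] by (rule Xp_pow_eq) simp
    show "Xp^(2*Suc i+5) * G 2 (Suc i) = Xp^2 * (Xp^(2*i+5) * G 2 i) + Xp^(3*i+9) * G 2 i"
      unfolding G_Suc h2[symmetric] h1 by (simp add: algebra_simps)
  qed simp
  finally show ?thesis by simp
qed

lemma Part1_poly:
  "(1 - Xp)^2 * G 1 (L+2) = (1 - Xp) * (1 + Xp^3) + Xp^5 + BB L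
     - Xp^(2*L+5) * G 2 L - (1 - Xp) * Xp^(L+3) * G 1 (L+1)"
proof -
  have e1: "(1 - Xp) * G 1 (L+2) = 1 + Xp^3 + (1 + Xp) * AB L - Xp^(L+3) * G 1 (L+1)"
  proof -
    have h: "L + 2 = Suc (Suc L)" "Suc L + 2 = L + 3" "L + 1 = Suc L" by simp_all
    show ?thesis using I1[of "Suc L"] I2[of L] unfolding h by (simp add: algebra_simps)
  qed
  have e2: "AB (Suc L) = AB L + Xp^(2*L+5) * G 2 L" by (simp add: AB_def)
  have e3: "(1 - Xp^2) * AB L = Xp^5 + BB L - Xp^(2*L+5) * G 2 L"
    using I3[of L] e2 by (simp add: algebra_simps)
  have "(1 - Xp)^2 * G 1 (L+2) = (1 - Xp) * ((1 - Xp) * G 1 (L+2))"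
    by (simp add: power2_eq_square algebra_simps)
  also have "\<dots> = (1 - Xp) * (1 + Xp^3) + (1 - Xp^2) * AB L - (1 - Xp) * Xp^(L+3) * G 1 (L+1)"
    unfolding e1 by (simp add: algebra_simps power2_eq_square)
  also have "\<dots> = (1 - Xp) * (1 + Xp^3) + Xp^5 + BB L
     - Xp^(2*L+5) * G 2 L - (1 - Xp) * Xp^(L+3) * G 1 (L+1)"
    unfolding e3 by simp
  finally show ?thesis .
qed


definition ff :: "nat \<Rightarrow> nat \<Rightarrow> nat \<Rightarrow> int poly" where
  "ff c t N = (\<Sum>i<N. (- (Xp^t))^i * G c i)"

lemma ff_Suc: "ff c t (Suc N) = ff c t N + (- (Xp^t))^N * G c N"
  by (simp add: ff_def)

lemma l1: "(- z)^(Suc i) * ((1 + a) * g) = - (z * (1 + a) * ((- z)^i * (g::int poly)))"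
  by (simp only: power_Suc) (simp add: algebra_simps)
lemma l2: "(- z)^(Suc i) * (g * (1 + a)) = - (z * ((- z)^i * (g::int poly))) + - (z * (a * ((- z)^i * g)))"
  by (simp only: power_Suc) (simp add: algebra_simps)
lemma l3: "(- z)^i * (w::int poly)^i = (- (z*w))^i"
  by (simp add: power_mult_distrib[symmetric])

lemma R1: "ff c t (Suc N) = 1 - Xp^t * (1 + Xp^c) * ff (Suc c) t N"
proof -
  have "ff c t (Suc N) = (- (Xp^t))^0 * G c 0 + (\<Sum>i<N. (- (Xp^t))^(Suc i) * G c (Suc i))"
    unfolding ff_def by (subst sum.lessThan_Suc_shift) simp
  also have "(\<Sum>i<N. (- (Xp^t))^(Suc i) * G c (Suc i)) = - (Xp^t * (1 + Xp^c) * ff (Suc c) t N)"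
    unfolding ff_def sum_distrib_left sum_negf[symmetric]
    by (rule sum.cong) (simp_all only: G_Suc' l1)
  finally show ?thesis by simp
qed

lemma R2: "ff c t (Suc N) = 1 - Xp^t * ff c t N - Xp^(t+c) * ff c (Suc t) N"
proof -
  have "ff c t (Suc N) = (- (Xp^t))^0 * G c 0 + (\<Sum>i<N. (- (Xp^t))^(Suc i) * G c (Suc i))"
    unfolding ff_def by (subst sum.lessThan_Suc_shift) simp
  also have "(\<Sum>i<N. (- (Xp^t))^(Suc i) * G c (Suc i)) = - (Xp^t * ff c t N) - Xp^(t+c) * ff c (Suc t) N"
    unfolding ff_def sum_distrib_left sum_negf[symmetric] diff_conv_add_uminus sum.distrib[symmetric]
  proof (rule sum.cong)
    fix i assume "i \<in> {..<N}"
    have k: "Xp^t * (Xp^(c+i) * ((- (Xp^t))^i * G c i)) = Xp^(t+c) * ((- (Xp^(Suc t)))^i * G c i)"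
    proof -
      have e1: "(- (Xp^(Suc t)))^i = (- (Xp^t))^i * Xp^i" by (simp only: l3 power_Suc2)
      show ?thesis unfolding e1 power_add by (simp only: mult_ac)
    qed
    show "(- (Xp^t))^(Suc i) * G c (Suc i) = - (Xp^t * ((- (Xp^t))^i * G c i)) + - (Xp^(t+c) * ((- (Xp^(Suc t)))^i * G c i))"
      unfolding G_Suc l2 k ..
  qed simp
  finally show ?thesis by simp
qed

definition eqv :: "nat \<Rightarrow> int poly \<Rightarrow> int poly \<Rightarrow> bool" where
  "eqv D p w \<longleftrightarrow> (\<forall>k<D. coeff p k = coeff w k)"

lemma eqv_refl[simp]: "eqv D p p" by (simp add: eqv_def)
lemma eqv_eq: "p = w \<Longrightarrow> eqv D p w" by simp
lemma eqv_sym: "eqv D p w \<Longrightarrow> eqv D w p" by (simp add: eqv_def)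
lemma eqv_trans[trans]: "eqv D p w \<Longrightarrow> eqv D w r \<Longrightarrow> eqv D p r" by (simp add: eqv_def)
lemma eqv_add: "eqv D p w \<Longrightarrow> eqv D p' w' \<Longrightarrow> eqv D (p + p') (w + w')" by (simp add: eqv_def)
lemma eqv_diff: "eqv D p w \<Longrightarrow> eqv D p' w' \<Longrightarrow> eqv D (p - p') (w - w')" by (simp add: eqv_def)
lemma eqv_mult: "eqv D p w \<Longrightarrow> eqv D (r * p) (r * w)"
  unfolding eqv_def coeff_mult by (auto intro!: sum.cong)
lemma eqv_high: "D \<le> n \<Longrightarrow> eqv D (Xp^n * p) 0"
  by (simp add: eqv_def coeff_Xp_mult)

lemma eqv_cancel:
  assumes c: "1 \<le> c" and h: "eqv D ((1 + Xp^c) * p) ((1 + Xp^c) * w)"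
  shows "eqv D p w"
proof -
  define r where "r = p - w"
  have hr: "\<forall>k<D. coeff r k + (if k < c then 0 else coeff r (k - c)) = 0"
  proof (intro allI impI)
    fix k assume "k < D"
    with h have "coeff ((1 + Xp^c) * p) k = coeff ((1 + Xp^c) * w) k" by (simp add: eqv_def)
    then have "coeff ((1 + Xp^c) * r) k = 0" by (simp add: r_def algebra_simps)
    then show "coeff r k + (if k < c then 0 else coeff r (k - c)) = 0"
      by (simp add: distrib_right coeff_Xp_mult)
  qed
  have "\<forall>k. k < D \<longrightarrow> coeff r k = 0"
  proof (intro allI)
    fix k show "k < D \<longrightarrow> coeff r k = 0"
    proof (induction k rule: less_induct)
      case (less k)
      show ?case
      proof
        assume "k < D"
        with hr have "coeff r k + (if k < c then 0 else coeff r (k - c)) = 0" by blast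
        moreover have "\<not> k < c \<Longrightarrow> coeff r (k - c) = 0"
          using less.IH[of "k - c"] c \<open>k < D\<close> by auto
        ultimately show "coeff r k = 0" by (auto split: if_splits)
      qed
    qed
  qed
  then show ?thesis by (simp add: eqv_def r_def)
qed

lemma ff_stable': "D \<le> t*N \<Longrightarrow> eqv D (ff c t (Suc N)) (ff c t N)"
proof -
  assume tn: "D \<le> t*N"
  have e: "(- (Xp^t))^N * G c N = (-1)^N * (Xp^(t*N) * G c N)"
    by (subst power_minus) (simp only: power_mult mult.assoc)
  have "eqv D ((-1)^N * (Xp^(t*N) * G c N)) ((-1)^N * 0)"
    by (rule eqv_mult, rule eqv_high[OF tn])
  then have "eqv D ((- (Xp^t))^N * G c N) 0" unfolding e by simp
  then have "eqv D (ff c t N + (- (Xp^t))^N * G c N) (ff c t N + 0)"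
    by (rule eqv_add[OF eqv_refl])
  then show ?thesis by (simp add: ff_Suc)
qed

lemma ff_stable: "1 \<le> t \<Longrightarrow> D \<le> N \<Longrightarrow> eqv D (ff c t (Suc N)) (ff c t N)"
  by (rule ff_stable') (cases t, auto)

lemma h_rec:
  assumes c: "1 \<le> c" and N: "D \<le> N"
  shows "eqv D (ff c c N) (1 - Xp^c + Xp^(3*c+1) * ff (Suc c) (Suc c) N)"
proof (rule eqv_cancel[OF c])
  let ?h = "ff c c N" and ?g = "ff c (Suc c) N" and ?h' = "ff (Suc c) (Suc c) N"
  have a1: "ff c c (Suc N) = 1 - Xp^c * ?h - Xp^(c+c) * ?g" by (rule R2)
  have a2: "eqv D (ff c c (Suc N)) ?h" by (rule ff_stable) (use c N in auto)
  have a3: "eqv D ?g (ff c (Suc c) (Suc N))" by (rule eqv_sym, rule ff_stable) (use N in auto)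
  have a4: "ff c (Suc c) (Suc N) = 1 - Xp^(Suc c) * (1 + Xp^c) * ?h'" by (rule R1)
  have "eqv D ((1 + Xp^c) * ?h) (ff c c (Suc N) + Xp^c * ?h)"
    using eqv_add[OF eqv_sym[OF a2] eqv_refl[of D "Xp^c * ?h"]] by (simp add: algebra_simps)
  also have "ff c c (Suc N) + Xp^c * ?h = 1 - Xp^(c+c) * ?g" using a1 by simp
  finally have b1: "eqv D ((1 + Xp^c) * ?h) (1 - Xp^(c+c) * ?g)" .
  have "eqv D (1 - Xp^(c+c) * ?g) (1 - Xp^(c+c) * (ff c (Suc c) (Suc N)))"
    by (rule eqv_diff[OF eqv_refl eqv_mult[OF a3]])
  also have "1 - Xp^(c+c) * (ff c (Suc c) (Suc N)) = (1 + Xp^c) * (1 - Xp^c + Xp^(3*c+1) * ?h')"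
  proof -
    have e: "Xp^(3*c+1) = Xp^(c+c) * Xp^(Suc c)" unfolding power_add[symmetric] by (rule Xp_pow_eq) simp
    show ?thesis unfolding a4 e by (simp add: algebra_simps power_add)
  qed
  finally show "eqv D ((1 + Xp^c) * ?h) ((1 + Xp^c) * (1 - Xp^c + Xp^(3*c+1) * ?h'))"
    using b1 eqv_trans by blast
qed


fun ee :: "nat \<Rightarrow> nat" where
  "ee 0 = 0"
| "ee (Suc u) = ee u + 3 * u + 10"

lemma ee_ge: "u \<le> ee u" by (induction u) auto

lemma ee_closed: "2 * ee u = 3 * u^2 + 17 * u"
  by (induction u) (auto simp: power2_eq_square algebra_simps)

lemma h_iter:
  assumes N: "D \<le> N"
  shows "eqv D (ff 3 3 N) ((\<Sum>u<U. Xp^(ee u) * (1 - Xp^(3+u))) + Xp^(ee U) * ff (3+U) (3+U) N)"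
proof (induction U)
  case 0
  then show ?case by simp
next
  case (Suc U)
  have r: "eqv D (ff (3+U) (3+U) N) (1 - Xp^(3+U) + Xp^(3*(3+U)+1) * ff (Suc (3+U)) (Suc (3+U)) N)"
    by (rule h_rec) (use N in auto)
  have e: "Xp^(ee U) * Xp^(3*(3+U)+1) = Xp^(ee (Suc U))"
    unfolding power_add[symmetric] by (rule Xp_pow_eq) simp
  have "eqv D ((\<Sum>u<U. Xp^(ee u) * (1 - Xp^(3+u))) + Xp^(ee U) * ff (3+U) (3+U) N)
     ((\<Sum>u<U. Xp^(ee u) * (1 - Xp^(3+u))) + Xp^(ee U) * (1 - Xp^(3+U) + Xp^(3*(3+U)+1) * ff (Suc (3+U)) (Suc (3+U)) N))"
    by (rule eqv_add[OF eqv_refl eqv_mult[OF r]])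
  also have "(\<Sum>u<U. Xp^(ee u) * (1 - Xp^(3+u))) + Xp^(ee U) * (1 - Xp^(3+U) + Xp^(3*(3+U)+1) * ff (Suc (3+U)) (Suc (3+U)) N)
     = (\<Sum>u<Suc U. Xp^(ee u) * (1 - Xp^(3+u))) + Xp^(ee (Suc U)) * ff (3 + Suc U) (3 + Suc U) N"
    unfolding e[symmetric] by (simp add: algebra_simps)
  finally show ?case using Suc eqv_trans by blast
qed

lemma h_closed:
  assumes N: "D \<le> N"
  shows "eqv D (ff 3 3 N) (\<Sum>u<D. Xp^(ee u) * (1 - Xp^(3+u)))"
proof -
  have "eqv D (ff 3 3 N) ((\<Sum>u<D. Xp^(ee u) * (1 - Xp^(3+u))) + Xp^(ee D) * ff (3+D) (3+D) N)"
    by (rule h_iter[OF N])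
  also have "eqv D ((\<Sum>u<D. Xp^(ee u) * (1 - Xp^(3+u))) + Xp^(ee D) * ff (3+D) (3+D) N)
      ((\<Sum>u<D. Xp^(ee u) * (1 - Xp^(3+u))) + 0)"
    by (rule eqv_add[OF eqv_refl eqv_high[OF ee_ge]])
  finally show ?thesis by simp
qed


lemma coeff_1_Xp: "coeff (1::int poly) n = (if n = 0 then 1 else 0)"
  by simp

lemma Part1_coeff:
  assumes n: "6 \<le> n"
  shows "coeff (G 1 (n+2)) n - 2 * coeff (G 1 (n+2)) (n-1) + coeff (G 1 (n+2)) (n-2)
       = (\<Sum>i<n. coeff (Xp^(3*i+9) * G 2 i) n)"
proof -
  have sq: "(1 - Xp)^2 * G 1 (n+2) = G 1 (n+2) - Xp^1 * G 1 (n+2) - Xp^1 * G 1 (n+2) + Xp^2 * G 1 (n+2)"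
    by (simp add: power2_eq_square algebra_simps)
  have "coeff ((1 - Xp)^2 * G 1 (n+2)) n = coeff (G 1 (n+2)) n - 2 * coeff (G 1 (n+2)) (n-1) + coeff (G 1 (n+2)) (n-2)"
    unfolding sq coeff_add coeff_diff coeff_Xp_mult using n by simp
  moreover have "coeff ((1 - Xp)^2 * G 1 (n+2)) n = (\<Sum>i<n. coeff (Xp^(3*i+9) * G 2 i) n)"
  proof -
    have low: "(1 - Xp) * (1 + Xp^3) + Xp^5 = 1 - Xp^1 + Xp^3 - Xp^4 + Xp^5"
    proof -
      have x4: "Xp * Xp^3 = Xp^4" using power_add[of Xp 1 3] by simp
      show ?thesis by (simp add: algebra_simps x4)
    qed
    have c1: "coeff ((1 - Xp) * (1 + Xp^3) + Xp^5) n = 0"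
      unfolding low using n by (simp add: coeff_Xp coeff_Xp1)
    have c2: "coeff (Xp^(2*n+5) * G 2 n) n = 0" by (simp add: coeff_Xp_mult)
    have c3: "coeff ((1 - Xp) * Xp^(n+3) * G 1 (n+1)) n = 0"
      using coeff_Xp_mult[of "n+3" "(1 - Xp) * G 1 (n+1)" n] by (simp add: mult_ac)
    have c4: "coeff (BB n) n = (\<Sum>i<n. coeff (Xp^(3*i+9) * G 2 i) n)"
      by (simp add: BB_def coeff_sum)
    show ?thesis unfolding Part1_poly using c1 c2 c3 c4 by simp
  qed
  ultimately show ?thesis by simp
qed

lemma coeff_neg1_pow: "coeff (((-1)::int poly)^i * p) n = (-1)^i * coeff p n"
  by (cases "even i") (simp_all add: neg_one_even_power neg_one_odd_power)

lemma ff23_coeff: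
  "coeff (Xp^9 * ff 2 3 N) n = (\<Sum>i<N. (-1)^i * coeff (Xp^(3*i+9) * G 2 i) n)"
proof -
  have "Xp^9 * ff 2 3 N = (\<Sum>i<N. (-1)^i * (Xp^(3*i+9) * G 2 i))"
    unfolding ff_def sum_distrib_left
  proof (rule sum.cong)
    fix i
    have a: "(- (Xp^3))^i = (-1)^i * Xp^(3*i)" by (subst power_minus) (simp only: power_mult)
    have b: "Xp^9 * Xp^(3*i) = Xp^(3*i+9)" unfolding power_add[symmetric] by (rule Xp_pow_eq) simp
    show "Xp^9 * ((- (Xp^3))^i * G 2 i) = (-1)^i * (Xp^(3*i+9) * G 2 i)"
      unfolding a b[symmetric] by (simp only: mult_ac)
  qed simp
  then show ?thesis by (simp add: coeff_sum coeff_neg1_pow)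
qed

lemma ring9: "(X::int poly)^9 * (X^3 * (1 + X^2) * (y * (1 - z))) = X^9 * X^3 * y + X^9 * X^3 * X^2 * y - X^9 * X^3 * y * z - X^9 * X^3 * X^2 * y * z"
  by (simp add: algebra_simps)

lemma eps_poly:
  "Xp^9 * (1 - Xp^3 * (1 + Xp^2) * (\<Sum>u<D. Xp^(ee u) * (1 - Xp^(3+u))))
   = Xp^9 - (\<Sum>u<D. Xp^(ee u + 12) + Xp^(ee u + 14) - Xp^(ee u + u + 15) - Xp^(ee u + u + 17))"
proof -
  have "Xp^9 * (Xp^3 * (1 + Xp^2) * (\<Sum>u<D. Xp^(ee u) * (1 - Xp^(3+u))))
     = (\<Sum>u<D. Xp^(ee u + 12) + Xp^(ee u + 14) - Xp^(ee u + u + 15) - Xp^(ee u + u + 17))"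
    unfolding sum_distrib_left
  proof (rule sum.cong)
    fix u
    have e: "Xp^(ee u + 12) = Xp^9 * Xp^3 * Xp^(ee u)" "Xp^(ee u + 14) = Xp^9 * Xp^3 * Xp^2 * Xp^(ee u)"
      "Xp^(ee u + u + 15) = Xp^9 * Xp^3 * Xp^(ee u) * Xp^(3+u)"
      "Xp^(ee u + u + 17) = Xp^9 * Xp^3 * Xp^2 * Xp^(ee u) * Xp^(3+u)"
      unfolding power_add[symmetric] by (rule Xp_pow_eq, simp)+
    show "Xp^9 * (Xp^3 * (1 + Xp^2) * (Xp^(ee u) * (1 - Xp^(3+u)))) =
      Xp^(ee u + 12) + Xp^(ee u + 14) - Xp^(ee u + u + 15) - Xp^(ee u + u + 17)"
      unfolding e by (rule ring9)
  qed simp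
  then show ?thesis by (simp add: right_diff_distrib)
qed

lemma sum4: "(\<Sum>u\<in>A. (a u + b u - c u - d u :: int)) = sum a A + sum b A - sum c A - sum d A"
  by (simp add: sum.distrib sum_subtractf)

definition ind :: "(nat \<Rightarrow> nat) \<Rightarrow> nat \<Rightarrow> int" where
  "ind f n = (if \<exists>u. n = f u then 1 else 0)"

lemma ee_key: "u < v \<Longrightarrow> ee u + 3*u + 10 \<le> ee v"
proof (induction v)
  case 0 then show ?case by simp
next
  case (Suc v)
  then show ?case by (cases "u = v") auto
qed

lemma ind_sum:
  assumes mono: "\<And>u v. u < v \<Longrightarrow> f u < f v" and ge: "\<And>u. u \<le> f u"
  shows "(\<Sum>u<Suc n. if n = f u then 1 else 0 :: int) = ind f n"
proof (cases "\<exists>u. n = f u")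
  case True
  then obtain u0 where u0: "n = f u0" by blast
  have "u0 < Suc n" using ge[of u0] u0 by simp
  have "(\<Sum>u<Suc n. if n = f u then 1 else 0 :: int) = (\<Sum>u<Suc n. if u = u0 then 1 else 0)"
  proof (rule sum.cong)
    fix u show "(if n = f u then 1 else 0 :: int) = (if u = u0 then 1 else 0)"
      using mono[of u u0] mono[of u0 u] u0 by (cases u u0 rule: linorder_cases) auto
  qed simp
  also have "\<dots> = 1" using \<open>u0 < Suc n\<close> by simp
  finally show ?thesis using True by (simp add: ind_def)
next
  case False
  then show ?thesis by (simp add: ind_def)
qed

definition eps :: "nat \<Rightarrow> int" where
  "eps n = (if n = 9 then 1 else 0) + ind (\<lambda>u. ee u + u + 17) n + ind (\<lambda>u. ee u + u + 15) n
           - ind (\<lambda>u. ee u + 12) n - ind (\<lambda>u. ee u + 14) n"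

lemma Part2_coeff:
  assumes n: "1 \<le> n"
  shows "(\<Sum>i<n. (-1)^i * coeff (Xp^(3*i+9) * G 2 i) n) = eps n"
proof -
  let ?D = "Suc n"
  have s1: "eqv ?D (ff 2 3 (Suc n)) (ff 2 3 n)" by (rule ff_stable') (use n in simp)
  have s2: "eqv ?D (ff 2 3 (Suc (Suc n))) (ff 2 3 (Suc n))" by (rule ff_stable') (use n in simp)
  have r: "ff 2 3 (Suc (Suc n)) = 1 - Xp^3 * (1 + Xp^2) * ff 3 3 (Suc n)"
    using R1[of 2 3 "Suc n"] by (simp add: numeral_3_eq_3)
  have hc: "eqv ?D (ff 3 3 (Suc n)) (\<Sum>u<?D. Xp^(ee u) * (1 - Xp^(3+u)))"
    by (rule h_closed) simp
  have "eqv ?D (ff 2 3 n) (1 - Xp^3 * (1 + Xp^2) * (\<Sum>u<?D. Xp^(ee u) * (1 - Xp^(3+u))))"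
  proof -
    have "eqv ?D (ff 2 3 n) (ff 2 3 (Suc (Suc n)))"
      using eqv_trans[OF eqv_sym[OF s1] eqv_sym[OF s2]] .
    also have "eqv ?D (ff 2 3 (Suc (Suc n))) (1 - Xp^3 * (1 + Xp^2) * (\<Sum>u<?D. Xp^(ee u) * (1 - Xp^(3+u))))"
      unfolding r by (rule eqv_diff[OF eqv_refl], rule eqv_mult[OF hc])
    finally show ?thesis .
  qed
  then have "eqv ?D (Xp^9 * ff 2 3 n) (Xp^9 * (1 - Xp^3 * (1 + Xp^2) * (\<Sum>u<?D. Xp^(ee u) * (1 - Xp^(3+u)))))"
    by (rule eqv_mult)
  then have "coeff (Xp^9 * ff 2 3 n) n = coeff (Xp^9 * (1 - Xp^3 * (1 + Xp^2) * (\<Sum>u<?D. Xp^(ee u) * (1 - Xp^(3+u))))) n"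
    by (simp add: eqv_def)
  also have "\<dots> = (if n = 9 then 1 else 0) - ((\<Sum>u<?D. if n = ee u + 12 then 1 else 0) + (\<Sum>u<?D. if n = ee u + 14 then 1 else 0)
        - (\<Sum>u<?D. if n = ee u + u + 15 then 1 else 0) - (\<Sum>u<?D. if n = ee u + u + 17 then 1 else 0))"
    unfolding eps_poly coeff_diff coeff_sum coeff_add coeff_Xp sum4 ..
  also have "\<dots> = eps n"
  proof -
    have m: "\<And>u v. u < v \<Longrightarrow> ee u < ee v" using ee_key by fastforce
    have m2: "u < v \<Longrightarrow> ee u + u < ee v + v" for u v using m[of u v] by simp
    have i1: "(\<Sum>u<?D. if n = ee u + 12 then 1 else 0) = ind (\<lambda>u. ee u + 12) n"
      by (rule ind_sum) (auto simp: m trans_le_add1 ee_ge)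
    have i2: "(\<Sum>u<?D. if n = ee u + 14 then 1 else 0) = ind (\<lambda>u. ee u + 14) n"
      by (rule ind_sum) (auto simp: m trans_le_add1 ee_ge)
    have i3: "(\<Sum>u<?D. if n = ee u + u + 15 then 1 else 0) = ind (\<lambda>u. ee u + u + 15) n"
      by (rule ind_sum) (auto simp: m2 trans_le_add1)
    have i4: "(\<Sum>u<?D. if n = ee u + u + 17 then 1 else 0) = ind (\<lambda>u. ee u + u + 17) n"
      by (rule ind_sum) (auto simp: m2 trans_le_add1)
    show ?thesis unfolding eps_def i1 i2 i3 i4 by simp
  qed
  finally show ?thesis using ff23_coeff[of n n] by simp
qed

lemma card_subsets_insert:
  fixes S :: "nat set"
  assumes S: "finite S" and a: "a \<notin> S"
  shows "card {C. C \<subseteq> insert a S \<and> \<Sum>C = r} =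
         card {C. C \<subseteq> S \<and> \<Sum>C = r} + (if a \<le> r then card {C. C \<subseteq> S \<and> \<Sum>C = r - a} else 0)"
proof -
  let ?X = "{C. C \<subseteq> S \<and> \<Sum>C = r}"
  let ?Y = "{C. C \<subseteq> S \<and> \<Sum>C + a = r}"
  have fin: "finite {C. C \<subseteq> S \<and> P C}" for P using S by (rule rev_finite_subset[OF finite_Pow_iff[THEN iffD2]]) auto
  have split: "{C. C \<subseteq> insert a S \<and> \<Sum>C = r} = ?X \<union> insert a ` ?Y"
  proof (intro equalityI subsetI)
    fix C assume C: "C \<in> {C. C \<subseteq> insert a S \<and> \<Sum>C = r}"
    show "C \<in> ?X \<union> insert a ` ?Y"
    proof (cases "a \<in> C")
      case True
      have "C = insert a (C - {a})" using True by auto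
      moreover have "C - {a} \<in> ?Y"
      proof -
        have "finite C" using C S by (auto intro: finite_subset)
        then have "\<Sum>C = a + \<Sum>(C - {a})" using True by (simp add: sum.remove)
        then show ?thesis using C by (auto simp: add.commute)
      qed
      ultimately show ?thesis by blast
    next
      case False
      then show ?thesis using C by auto
    qed
  next
    fix C assume "C \<in> ?X \<union> insert a ` ?Y"
    then show "C \<in> {C. C \<subseteq> insert a S \<and> \<Sum>C = r}"
    proof
      assume "C \<in> ?X" then show ?thesis by auto
    next
      assume "C \<in> insert a ` ?Y"
      then obtain D where D: "D \<subseteq> S" "\<Sum>D + a = r" and C: "C = insert a D" by auto
      have "finite D" using D S by (auto intro: finite_subset)
      moreover have "a \<notin> D" using D a by auto
      ultimately show ?thesis using C D by (auto simp: add.commute)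
    qed
  qed
  have disj: "?X \<inter> insert a ` ?Y = {}" using a by auto
  have inj: "inj_on (insert a) ?Y"
    unfolding inj_on_def using a by (metis (mono_tags, lifting) insert_ident mem_Collect_eq subset_iff)
  have "card {C. C \<subseteq> insert a S \<and> \<Sum>C = r} = card ?X + card ?Y"
    unfolding split using fin disj inj by (simp add: card_Un_disjoint card_image)
  moreover have "card ?Y = (if a \<le> r then card {C. C \<subseteq> S \<and> \<Sum>C = r - a} else 0)"
  proof (cases "a \<le> r")
    case True
    then have "?Y = {C. C \<subseteq> S \<and> \<Sum>C = r - a}" by auto
    then show ?thesis using True by simp
  next
    case False
    then have "?Y = {}" by auto
    then show ?thesis using False by simp
  qed
  ultimately show ?thesis by simp
qed

lemma coeff_prod_card:
  "finite S \<Longrightarrow> coeff (\<Prod>k\<in>S. 1 + Xp^k) r = int (card {C. C \<subseteq> S \<and> \<Sum>C = r})"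
proof (induction S arbitrary: r rule: finite_induct)
  case empty
  have "{C. C \<subseteq> {} \<and> \<Sum>C = r} = (if r = 0 then {{}} else {})" by auto
  then show ?case by simp
next
  case (insert a S)
  have "coeff (\<Prod>k\<in>insert a S. 1 + Xp^k) r = coeff ((\<Prod>k\<in>S. 1 + Xp^k) + Xp^a * (\<Prod>k\<in>S. 1 + Xp^k)) r"
    using insert by (simp add: algebra_simps)
  also have "\<dots> = int (card {C. C \<subseteq> S \<and> \<Sum>C = r}) + (if a \<le> r then int (card {C. C \<subseteq> S \<and> \<Sum>C = r - a}) else 0)"
    by (simp add: coeff_Xp_mult insert.IH)
  also have "\<dots> = int (card {C. C \<subseteq> insert a S \<and> \<Sum>C = r})"
    using card_subsets_insert[OF insert.hyps] by simp
  finally show ?case .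
qed

lemma G_card: "coeff (G c i) r = int (card {C. C \<subseteq> {c..<c+i} \<and> \<Sum>C = r})"
  unfolding G_def by (rule coeff_prod_card) simp

lemma q_coeff: "k \<le> N \<Longrightarrow> int (q (int k)) = coeff (G 1 N) k"
proof -
  assume k: "k \<le> N"
  have "distinct_partitions k = {C. C \<subseteq> {1..<1+N} \<and> \<Sum>C = k}"
  proof (intro equalityI subsetI)
    fix C assume "C \<in> distinct_partitions k"
    then have C: "finite C" "0 \<notin> C" "\<Sum>C = k" by (auto simp: distinct_partitions_def)
    have xk: "x \<le> k" if "x \<in> C" for x using member_le_sum[of x C id] C that by simp
    moreover have "x \<in> {1..<1+N}" if "x \<in> C" for x
    proof -
      have "x \<noteq> 0" using C(2) that by metis
      moreover have "x \<le> N" using xk[OF that] k by simp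
      ultimately show ?thesis by simp
    qed
    ultimately show "C \<in> {C. C \<subseteq> {1..<1+N} \<and> \<Sum>C = k}" using C by auto
  next
    fix C assume "C \<in> {C. C \<subseteq> {1..<1+N} \<and> \<Sum>C = k}"
    then show "C \<in> distinct_partitions k"
      by (auto simp: distinct_partitions_def intro: finite_subset)
  qed
  then show ?thesis by (simp add: q_def G_card)
qed

lemma w_card: "coeff (Xp^(3*i+9) * G 2 i) n = int (card {C. C \<subseteq> {2..<2+i} \<and> \<Sum>C + (3*i+9) = n})"
proof (cases "3*i+9 \<le> n")
  case True
  then have "{C. C \<subseteq> {2..<2+i} \<and> \<Sum>C + (3*i+9) = n} = {C. C \<subseteq> {2..<2+i} \<and> \<Sum>C = n - (3*i+9)}" by auto
  then show ?thesis using True by (simp add: coeff_Xp_mult G_card)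
next
  case False
  then have "{C. C \<subseteq> {2..<2+i} \<and> \<Sum>C + (3*i+9) = n} = {}" by auto
  then show ?thesis using False by (simp add: coeff_Xp_mult)
qed

lemma parts_props:
  assumes "finite A"
  shows "length (parts A) = card A" "set (parts A) = A"
    "\<And>i j. i < j \<Longrightarrow> j < length (parts A) \<Longrightarrow> parts A ! j < parts A ! i"
proof -
  show "length (parts A) = card A" "set (parts A) = A" using assms by (simp_all add: parts_def)
  have "sorted_wrt (<) (sorted_list_of_set A)" by simp
  then have "sorted_wrt (\<lambda>x y. y < x) (parts A)" unfolding parts_def by (simp add: sorted_wrt_rev)
  then show "\<And>i j. i < j \<Longrightarrow> j < length (parts A) \<Longrightarrow> parts A ! j < parts A ! i"
    using sorted_wrt_nth_less by fastforce
qed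

lemma parts_form:
  assumes C: "C \<subseteq> {2..<2+i}"
  shows "parts (C \<union> {i+2, i+3, i+4}) = [i+4, i+3, i+2] @ rev (sorted_list_of_set C)"
proof -
  have fC: "finite C" using C finite_subset by blast
  have "sorted_list_of_set (C \<union> {i+2, i+3, i+4}) = sorted_list_of_set C @ [i+2, i+3, i+4]"
  proof (rule strict_sorted_equal)
    show "sorted_wrt (<) (sorted_list_of_set C @ [i+2, i+3, i+4])"
      using C fC by (auto simp: sorted_wrt_append)
    show "sorted_wrt (<) (sorted_list_of_set (C \<union> {i+2, i+3, i+4}))" by simp
    have "set (sorted_list_of_set (C \<union> {i+2, i+3, i+4})) = C \<union> {i+2, i+3, i+4}"
      by (rule set_sorted_list_of_set) (use fC in simp)
    moreover have "set (sorted_list_of_set C @ [i+2, i+3, i+4]) = C \<union> {i+2, i+3, i+4}"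
      using fC by auto
    ultimately show "set (sorted_list_of_set (C \<union> {i+2, i+3, i+4})) = set (sorted_list_of_set C @ [i+2, i+3, i+4])"
      by simp
  qed
  then show ?thesis by (simp add: parts_def)
qed

lemma butterfly_of_form:
  assumes C: "C \<subseteq> {2..<2+i}" and sum: "\<Sum>C + (3*i+9) = n"
  shows "butterfly n (C \<union> {i+2, i+3, i+4})" "parts (C \<union> {i+2, i+3, i+4}) ! 1 = i+3"
proof -
  let ?A = "C \<union> {i+2, i+3, i+4}"
  have fC: "finite C" using C finite_subset by blast
  have disj: "C \<inter> {i+2, i+3, i+4} = {}" using C by auto
  have cardA: "card ?A = card C + 3" using fC disj by (simp add: card_Un_disjoint)
  have sumA: "\<Sum>?A = n"
  proof -
    have "\<Sum>?A = \<Sum>C + \<Sum>{i+2, i+3, i+4}" using fC disj by (simp add: sum.union_disjoint)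
    also have "\<Sum>{i+2, i+3, i+4} = 3*i+9" by simp
    finally show ?thesis using sum by simp
  qed
  have P: "parts ?A = [i+4, i+3, i+2] @ rev (sorted_list_of_set C)" by (rule parts_form[OF C])
  have dp: "?A \<in> distinct_partitions n" using fC sumA C by (auto simp: distinct_partitions_def)
  have last: "parts ?A ! (card ?A - 1) \<ge> 2"
  proof -
    have "card ?A - 1 < length (parts ?A)" using parts_props(1)[of ?A] fC cardA by simp
    then have "parts ?A ! (card ?A - 1) \<in> ?A" using parts_props(2)[of ?A] fC by (metis finite_Un finite_insert finite.emptyI nth_mem)
    then show ?thesis using C by auto
  qed
  show "butterfly n ?A" unfolding butterfly_def P using dp cardA last[unfolded P] by simp
  show "parts ?A ! 1 = i+3" unfolding P by simp
qed

lemma butterfly_form: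
  assumes b: "butterfly n A"
  obtains i C where "C \<subseteq> {2..<2+i}" "A = C \<union> {i+2, i+3, i+4}" "parts A ! 1 = i+3"
proof -
  let ?L = "parts A"
  have fA: "finite A" and cA: "card A \<ge> 3" and e0: "?L!0 = ?L!1 + 1" and e2: "?L!0 = ?L!2 + 2"
    and lst: "?L ! (card A - 1) \<ge> 2"
    using b by (auto simp: butterfly_def distinct_partitions_def)
  note len = parts_props(1)[OF fA] and st = parts_props(2)[OF fA] and dec = parts_props(3)[OF fA]
  have ge2: "x \<ge> 2" if "x \<in> A" for x
  proof -
    have "x \<in> set ?L" using that st by simp
    then obtain k where k: "k < length ?L" "x = ?L!k" by (auto simp: in_set_conv_nth)
    show ?thesis
    proof (cases "k = card A - 1")
      case True then show ?thesis using k lst by simp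
    next
      case False
      have kk: "k < card A - 1" using False k len by simp
      have "?L!(card A - 1) < ?L!k" by (rule dec[OF kk]) (use len cA in simp)
      then show ?thesis using k lst by simp
    qed
  qed
  define m where "m = ?L!1"
  have l2: "?L!2 = m - 1" and l0: "?L!0 = m + 1" using e0 e2 by (auto simp: m_def)
  have "0 < length ?L" "1 < length ?L" "2 < length ?L" using len cA by auto
  then have in2: "?L!2 \<in> A" and in1: "?L!1 \<in> A" and in0: "?L!0 \<in> A"
    using st nth_mem by blast+
  have "m \<ge> 3" using ge2[OF in2] l2 by simp
  define i where "i = m - 3"
  have mi: "m = i + 3" using \<open>m \<ge> 3\<close> by (simp add: i_def)
  have L0: "?L!0 = i+4" using l0 mi by simp
  have L1: "?L!1 = i+3" using mi m_def by simp
  have L2: "?L!2 = i+2" using l2 mi by simp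
  define C where "C = A - {i+2, i+3, i+4}"
  have sub3: "{i+2, i+3, i+4} \<subseteq> A" using in0 in1 in2 L0 L1 L2 by auto
  have "C \<subseteq> {2..<2+i}"
  proof
    fix x assume x: "x \<in> C"
    then have xA: "x \<in> A" and xn: "x \<noteq> i+2" "x \<noteq> i+3" "x \<noteq> i+4" by (simp_all add: C_def)
    have "x \<in> set ?L" using xA st by simp
    then obtain k where k: "k < length ?L" "x = ?L!k" by (auto simp: in_set_conv_nth)
    have "k \<noteq> 0" using xn(3) k(2) L0 by metis
    moreover have "k \<noteq> 1" using xn(2) k(2) L1 by metis
    moreover have "k \<noteq> 2" using xn(1) k(2) L2 by metis
    ultimately have "2 < k" by linarith
    then have "?L!k < ?L!2" using k(1) by (rule dec)
    then show "x \<in> {2..<2+i}" using k(2) L2 ge2[OF xA] by simp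
  qed
  moreover have "A = C \<union> {i+2, i+3, i+4}" using sub3 by (auto simp: C_def)
  ultimately show ?thesis using that L1 by blast
qed


lemma se_card:
  "s_e n = (\<Sum>i\<in>{i. i < n \<and> odd i}. card {C. C \<subseteq> {2..<2+i} \<and> \<Sum>C + (3*i+9) = n})"
proof -
  let ?I = "{i. i < n \<and> odd i}"
  let ?T = "\<lambda>i. {C. C \<subseteq> {2..<2+i} \<and> \<Sum>C + (3*i+9) = n}"
  let ?B = "{A. butterfly n A \<and> even (parts A ! 1)}"
  let ?phi = "\<lambda>(i, C). C \<union> {i+2, i+3, i+4}"
  have finI: "finite ?I" by simp
  have finT: "\<forall>i\<in>?I. finite (?T i)"
    by (auto intro: rev_finite_subset[of "Pow {2..<2+_}"])
  have bij: "bij_betw ?phi (SIGMA i:?I. ?T i) ?B"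
  proof (rule bij_betwI')
    fix x y assume x: "x \<in> (SIGMA i:?I. ?T i)" and y: "y \<in> (SIGMA i:?I. ?T i)"
    obtain i C where xi: "x = (i, C)" "C \<subseteq> {2..<2+i}" using x by auto
    obtain j D where yj: "y = (j, D)" "D \<subseteq> {2..<2+j}" using y by auto
    show "(?phi x = ?phi y) = (x = y)"
    proof
      assume eq: "?phi x = ?phi y"
      have "parts (C \<union> {i+2, i+3, i+4}) ! 1 = i+3" using parts_form[OF xi(2)] by simp
      moreover have "parts (D \<union> {j+2, j+3, j+4}) ! 1 = j+3" using parts_form[OF yj(2)] by simp
      ultimately have ij: "i = j" using eq xi yj by simp
      have "C = (C \<union> {i+2, i+3, i+4}) - {i+2, i+3, i+4}" using xi by auto
      also have "\<dots> = (D \<union> {j+2, j+3, j+4}) - {j+2, j+3, j+4}" using eq xi yj ij by simp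
      also have "\<dots> = D" using yj by auto
      finally show "x = y" using xi yj ij by simp
    qed simp
  next
    fix x assume x: "x \<in> (SIGMA i:?I. ?T i)"
    then obtain i C where xi: "x = (i, C)" "C \<subseteq> {2..<2+i}" "\<Sum>C + (3*i+9) = n" "odd i" by auto
    show "?phi x \<in> ?B" using butterfly_of_form[OF xi(2) xi(3)] xi(1,4) by simp
  next
    fix A assume "A \<in> ?B"
    then have b: "butterfly n A" and ev: "even (parts A ! 1)" by auto
    obtain i C where C: "C \<subseteq> {2..<2+i}" "A = C \<union> {i+2, i+3, i+4}" "parts A ! 1 = i+3"
      using butterfly_form[OF b] by blast
    have fC: "finite C" using C(1) finite_subset by blast
    have disj: "C \<inter> {i+2, i+3, i+4} = {}" using C(1) by auto
    have "\<Sum>A = n" using b by (simp add: butterfly_def distinct_partitions_def)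
    moreover have "\<Sum>A = \<Sum>C + (3*i+9)"
    proof -
      have "\<Sum>A = \<Sum>C + \<Sum>{i+2, i+3, i+4}" unfolding C(2) using fC disj by (simp add: sum.union_disjoint)
      also have "\<Sum>{i+2, i+3, i+4} = 3*i+9" by simp
      finally show ?thesis .
    qed
    ultimately have sum: "\<Sum>C + (3*i+9) = n" by simp
    have "odd i" using ev C(3) by simp
    moreover have "i < n" using sum by linarith
    ultimately have "(i, C) \<in> (SIGMA i:?I. ?T i)" using C(1) sum by simp
    moreover have "A = ?phi (i, C)" using C(2) by simp
    ultimately show "\<exists>x\<in>(SIGMA i:?I. ?T i). A = ?phi x" by blast
  qed
  have "s_e n = card ?B" by (simp add: s_e_def)
  also have "\<dots> = card (SIGMA i:?I. ?T i)" using bij_betw_same_card[OF bij] by simp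
  also have "\<dots> = (\<Sum>i\<in>?I. card (?T i))" using finI finT by (rule card_SigmaI)
  finally show ?thesis .
qed

lemma ee_int: "2 * int (ee u) = 3 * (int u)^2 + 17 * int u"
proof -
  have "int (2 * ee u) = int (3 * u^2 + 17 * u)" using ee_closed[of u] by simp
  then show ?thesis by simp
qed

lemma P1_0: "P1 2 = 9" by (simp add: P1_def)

lemma P1_val: "P1 (int (Suc v) + 2) = int (ee v + v + 17)"
proof -
  have "3 * (int (Suc v) + 2)^2 + (int (Suc v) + 2) + 4 = 2 * int (ee v + v + 17)"
    using ee_int[of v] by (simp add: power2_eq_square algebra_simps)
  then show ?thesis unfolding P1_def by simp
qed

lemma P2_val: "P2 (int u + 2) = int (ee u + 12)"
proof -
  have "3 * (int u + 2 + 1)^2 - (int u + 2) - 1 = 2 * int (ee u + 12)"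
    using ee_int[of u] by (simp add: power2_eq_square algebra_simps)
  then show ?thesis unfolding P2_def by simp
qed

lemma P3_val: "P3 (int u + 2) = int (ee u + 14)"
proof -
  have "3 * (int u + 2 + 1)^2 - (int u + 2) + 3 = 2 * int (ee u + 14)"
    using ee_int[of u] by (simp add: power2_eq_square algebra_simps)
  then show ?thesis unfolding P3_def by simp
qed

lemma P4_val: "P4 (int u + 2) = int (ee u + u + 15)"
proof -
  have "3 * (int u + 2 + 1)^2 + (int u + 2) + 1 = 2 * int (ee u + u + 15)"
    using ee_int[of u] by (simp add: power2_eq_square algebra_simps)
  then show ?thesis unfolding P4_def by simp
qed

lemma t_cases: "(t::int) \<ge> 2 \<Longrightarrow> \<exists>u. t = int u + 2"
  by (rule exI[of _ "nat (t - 2)"]) simp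

lemma ex_P1: "(\<exists>t::int. t \<ge> 2 \<and> int n = P1 t) \<longleftrightarrow> (n = 9 \<or> (\<exists>v. n = ee v + v + 17))"
proof
  assume "\<exists>t::int. t \<ge> 2 \<and> int n = P1 t"
  then obtain u where u: "int n = P1 (int u + 2)" using t_cases by blast
  show "n = 9 \<or> (\<exists>v. n = ee v + v + 17)"
  proof (cases u)
    case 0 then show ?thesis using u P1_0 by simp
  next
    case (Suc v)
    then have "int n = int (ee v + v + 17)" using u P1_val[of v] by simp
    then have "n = ee v + v + 17" by (simp only: of_nat_eq_iff)
    then show ?thesis by blast
  qed
next
  assume "n = 9 \<or> (\<exists>v. n = ee v + v + 17)"
  then show "\<exists>t::int. t \<ge> 2 \<and> int n = P1 t"
  proof
    assume "n = 9" then show ?thesis using P1_0 by (intro exI[of _ 2]) simp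
  next
    assume "\<exists>v. n = ee v + v + 17"
    then obtain v where "n = ee v + v + 17" by blast
    then show ?thesis using P1_val[of v] by (intro exI[of _ "int (Suc v) + 2"]) simp
  qed
qed

lemma ex_Pgen:
  assumes val: "\<And>u. P (int u + 2) = int (f u)"
  shows "(\<exists>t::int. t \<ge> 2 \<and> int n = P t) \<longleftrightarrow> (\<exists>u. n = f u)"
proof
  assume "\<exists>t::int. t \<ge> 2 \<and> int n = P t"
  then obtain u where u: "int n = P (int u + 2)" using t_cases by blast
  then show "\<exists>u. n = f u" using val[of u] by auto
next
  assume "\<exists>u. n = f u"
  then obtain u where "n = f u" by blast
  then show "\<exists>t::int. t \<ge> 2 \<and> int n = P t" using val[of u] by (intro exI[of _ "int u + 2"]) simp
qed

lemma ind_1: "n = f u \<Longrightarrow> ind f n = 1" by (auto simp: ind_def)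
lemma ind_0: "(\<And>u. n \<noteq> f u) \<Longrightarrow> ind f n = 0" by (auto simp: ind_def)

lemma disj_all:
  "ee u + 12 \<noteq> ee v + 14" "ee u + 12 \<noteq> ee v + v + 15" "ee u + 12 \<noteq> ee v + v + 17"
  "ee u + 14 \<noteq> ee v + v + 15" "ee u + 14 \<noteq> ee v + v + 17" "ee u + u + 15 \<noteq> ee v + v + 17"
  by (cases u v rule: linorder_cases; use ee_key[of u v] ee_key[of v u] in simp)+

lemma main_identity:
  assumes n: "6 \<le> n"
  shows "s (int n) = 2 * int (s_e n) + eps n"
proof -
  define W where "W i = coeff (Xp^(3*i+9) * G 2 i) n" for i
  have s1: "s (int n) = (\<Sum>i<n. W i)"
  proof -
    have a: "int (q (int n)) = coeff (G 1 (n+2)) n" by (rule q_coeff) simp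
    have b: "int (q (int n - 1)) = coeff (G 1 (n+2)) (n-1)"
    proof -
      have "int n - 1 = int (n - 1)" using n by simp
      then show ?thesis by (simp only:) (rule q_coeff, simp)
    qed
    have c: "int (q (int n - 2)) = coeff (G 1 (n+2)) (n-2)"
    proof -
      have "int n - 2 = int (n - 2)" using n by simp
      then show ?thesis by (simp only:) (rule q_coeff, simp)
    qed
    show ?thesis unfolding s_def a b c W_def by (rule Part1_coeff[OF n])
  qed
  have s2: "int (s_e n) = (\<Sum>i\<in>{i. i < n \<and> odd i}. W i)"
    unfolding se_card W_def w_card by simp
  have s3: "(\<Sum>i<n. (-1)^i * W i) = eps n"
    unfolding W_def by (rule Part2_coeff) (use n in simp)
  have "(\<Sum>i<n. W i) = (\<Sum>i<n. (-1)^i * W i + (if odd i then 2 * W i else 0))"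
    by (rule sum.cong) (auto simp: neg_one_even_power neg_one_odd_power)
  also have "\<dots> = eps n + (\<Sum>i<n. if odd i then 2 * W i else 0)"
    by (simp add: sum.distrib s3)
  also have "(\<Sum>i<n. if odd i then 2 * W i else 0) = 2 * (\<Sum>i\<in>{i. i < n \<and> odd i}. W i)"
  proof -
    have "(\<Sum>i<n. if odd i then 2 * W i else 0) = (\<Sum>i\<in>{..<n} \<inter> {i. odd i}. 2 * W i)"
      by (simp add: sum.inter_restrict)
    also have "{..<n} \<inter> {i. odd i} = {i. i < n \<and> odd i}" by auto
    finally show ?thesis by (simp add: sum_distrib_left)
  qed
  finally show ?thesis using s1 s2 by simp
qed


theorem corollary4p7:
  fixes n :: nat
  assumes "n \<ge> 6"
  shows "((\<forall>t::int. t \<ge> 2 \<longrightarrow> int n \<notin> {P1 t, P2 t, P3 t, P4 t})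
            \<longrightarrow> s (int n) = 2 * int (s_e n) \<and> even (s (int n)))
       \<and> ((\<exists>t::int. t \<ge> 2 \<and> (int n = P1 t \<or> int n = P4 t))
            \<longrightarrow> s (int n) = 2 * int (s_e n) + 1 \<and> odd (s (int n)))
       \<and> ((\<exists>t::int. t \<ge> 2 \<and> (int n = P2 t \<or> int n = P3 t))
            \<longrightarrow> s (int n) = 2 * int (s_e n) - 1 \<and> odd (s (int n)))"
proof -
  have main: "s (int n) = 2 * int (s_e n) + eps n" by (rule main_identity[OF assms])
  have e1: "(\<exists>t::int. t \<ge> 2 \<and> int n = P1 t) \<longleftrightarrow> (n = 9 \<or> (\<exists>v. n = ee v + v + 17))" by (rule ex_P1)
  have e2: "(\<exists>t::int. t \<ge> 2 \<and> int n = P2 t) \<longleftrightarrow> (\<exists>u. n = ee u + 12)" by (rule ex_Pgen[where P=P2 and f="\<lambda>u. ee u + 12", OF P2_val])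
  have e3: "(\<exists>t::int. t \<ge> 2 \<and> int n = P3 t) \<longleftrightarrow> (\<exists>u. n = ee u + 14)" by (rule ex_Pgen[where P=P3 and f="\<lambda>u. ee u + 14", OF P3_val])
  have e4: "(\<exists>t::int. t \<ge> 2 \<and> int n = P4 t) \<longleftrightarrow> (\<exists>u. n = ee u + u + 15)" by (rule ex_Pgen[where P=P4 and f="\<lambda>u. ee u + u + 15", OF P4_val])
  show ?thesis
  proof (rule conjI[OF impI conjI[OF impI impI]])
    assume H: "\<forall>t::int. t \<ge> 2 \<longrightarrow> int n \<notin> {P1 t, P2 t, P3 t, P4 t}"
    have n1: "\<not> (n = 9 \<or> (\<exists>v. n = ee v + v + 17))" using H e1 by auto
    have n2: "\<not> (\<exists>u. n = ee u + 12)" using H e2 by auto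
    have n3: "\<not> (\<exists>u. n = ee u + 14)" using H e3 by auto
    have n4: "\<not> (\<exists>u. n = ee u + u + 15)" using H e4 by auto
    have "eps n = 0" unfolding eps_def
      using n1 n2 n3 n4 by (simp add: ind_0)
    then show "s (int n) = 2 * int (s_e n) \<and> even (s (int n))" using main by simp
  next
    assume "\<exists>t::int. t \<ge> 2 \<and> (int n = P1 t \<or> int n = P4 t)"
    then have "(\<exists>t::int. t \<ge> 2 \<and> int n = P1 t) \<or> (\<exists>t::int. t \<ge> 2 \<and> int n = P4 t)" by blast
    then have c: "n = 9 \<or> (\<exists>v. n = ee v + v + 17) \<or> (\<exists>u. n = ee u + u + 15)" using e1 e4 by blast
    have "eps n = 1"
    proof -
      { assume n9: "n = 9"
        have ?thesis unfolding eps_def n9 by (simp add: ind_0) }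
      moreover
      { fix v assume nv: "n = ee v + v + 17"
        have "n \<noteq> 9" using nv by simp
        moreover have "ind (\<lambda>u. ee u + u + 17) n = 1" using nv by (rule ind_1)
        moreover have "ind (\<lambda>u. ee u + u + 15) n = 0" using nv disj_all(6) by (intro ind_0) metis
        moreover have "ind (\<lambda>u. ee u + 12) n = 0" using nv disj_all(3) by (intro ind_0) metis
        moreover have "ind (\<lambda>u. ee u + 14) n = 0" using nv disj_all(5) by (intro ind_0) metis
        ultimately have ?thesis unfolding eps_def by simp }
      moreover
      { fix v assume nv: "n = ee v + v + 15"
        have "n \<noteq> 9" using nv by simp
        moreover have "ind (\<lambda>u. ee u + u + 15) n = 1" using nv by (rule ind_1)
        moreover have "ind (\<lambda>u. ee u + u + 17) n = 0" using nv disj_all(6) by (intro ind_0) metis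
        moreover have "ind (\<lambda>u. ee u + 12) n = 0" using nv disj_all(2) by (intro ind_0) metis
        moreover have "ind (\<lambda>u. ee u + 14) n = 0" using nv disj_all(4) by (intro ind_0) metis
        ultimately have ?thesis unfolding eps_def by simp }
      ultimately show ?thesis using c by blast
    qed
    then show "s (int n) = 2 * int (s_e n) + 1 \<and> odd (s (int n))" using main by simp
  next
    assume "\<exists>t::int. t \<ge> 2 \<and> (int n = P2 t \<or> int n = P3 t)"
    then have "(\<exists>t::int. t \<ge> 2 \<and> int n = P2 t) \<or> (\<exists>t::int. t \<ge> 2 \<and> int n = P3 t)" by blast
    then have c: "(\<exists>u. n = ee u + 12) \<or> (\<exists>u. n = ee u + 14)" using e2 e3 by blast
    have "eps n = -1"
    proof -
      { fix v assume nv: "n = ee v + 12"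
        have "n \<noteq> 9" using nv by simp
        moreover have "ind (\<lambda>u. ee u + 12) n = 1" using nv by (rule ind_1)
        moreover have "ind (\<lambda>u. ee u + u + 17) n = 0" using nv disj_all(3) by (intro ind_0) metis
        moreover have "ind (\<lambda>u. ee u + u + 15) n = 0" using nv disj_all(2) by (intro ind_0) metis
        moreover have "ind (\<lambda>u. ee u + 14) n = 0" using nv disj_all(1) by (intro ind_0) metis
        ultimately have ?thesis unfolding eps_def by simp }
      moreover
      { fix v assume nv: "n = ee v + 14"
        have "n \<noteq> 9" using nv by simp
        moreover have "ind (\<lambda>u. ee u + 14) n = 1" using nv by (rule ind_1)
        moreover have "ind (\<lambda>u. ee u + u + 17) n = 0" using nv disj_all(5) by (intro ind_0) metis
        moreover have "ind (\<lambda>u. ee u + u + 15) n = 0" using nv disj_all(4) by (intro ind_0) metis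
        moreover have "ind (\<lambda>u. ee u + 12) n = 0" using nv disj_all(1) by (intro ind_0) metis
        ultimately have ?thesis unfolding eps_def by simp }
      ultimately show ?thesis using c by blast
    qed
    then show "s (int n) = 2 * int (s_e n) - 1 \<and> odd (s (int n))" using main by simp
  qed
qed

end
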